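(* Let $S:\mathbb{R}^m\times\mathbb{R}^n\to\mathbb{R}^q$ be bilinear with lifted operator $\mathscr{S}$, let $\mathcal{K}'\subseteq\mathbb{R}^{m\times n}$ and $\mathcal{M}=\mathcal{K}'-\mathcal{K}'$. Let $X\in\mathcal{N}(\mathscr{S},2)\cap\mathcal{M}\setminus\{0\}$ be a given $m\times n$ real matrix and $\delta\in(0,1)$. Let $\mathbf{M}=xy^T=\sigma uv^T$ be a random rank one matrix, where $x\in\mathbb{R}^m$, $y\in\mathbb{R}^n$ are random vectors satisfying: (A1) $x$ and $y$ each have zero mean and identity covariance; (A2) $x$ and $y$ are mutually independent; (A3) $\|x\|_2$ and $x/\|x\|_2$ are independent, and $\|y\|_2$ and $y/\|y\|_2$ are independent; here $u=x/\|x\|_2$, $v=y/\|y\|_2$. Then $\Pr(\|P_{\mathcal{C}(X)}u\|_2^2\ge1-\delta)\le\frac{2}{m(1-\delta)}$ and $\Pr(\|P_{\mathcal{R}(X)}v\|_2^2\ge1-\delta)\le\frac{2}{n(1-\delta)}$.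
   Context: For $j=1,\dots,q$ let $S_j$ be the unique matrix with $(S(x,y))_j=x^TS_jy$; the lifted operator is $(\mathscr{S}(W))_j=\operatorname{tr}(S_j^TW)$. $\mathcal{N}(\mathscr{S},k)=\{X:\operatorname{rank}(X)\le k,\ \mathscr{S}(X)=0\}$; $\mathcal{K}'-\mathcal{K}'=\{X_1-X_2:X_1,X_2\in\mathcal{K}'\}$. $\mathcal{C}(X)$, $\mathcal{R}(X)$ are the column and row spaces of $X$, and $P_{\mathcal{V}}$ is the orthogonal projection matrix onto a subspace $\mathcal{V}$. *)

theory Defs
  imports "HOL-Analysis.Analysis" "HOL-Probability.Probability"
begin

text \<open>S_j is the matrix with entries (S_j)_{ab} = (S(e_a,e_b))_j, so that
  (S(x,y))_j = x^T S_j y; the lifted operator is (lifted S W)_j = tr(S_j^T W).\<close>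
definition bil_matrix ::
  "(real^'m \<Rightarrow> real^'n \<Rightarrow> real^'q) \<Rightarrow> 'q \<Rightarrow> real^'n^'m" where
  "bil_matrix S j = (\<chi> a b. S (axis a 1) (axis b 1) $ j)"

definition trace_mat :: "real^'k^'k \<Rightarrow> real" where
  "trace_mat A = (\<Sum>i\<in>UNIV. A $ i $ i)"

definition lifted ::
  "(real^'m \<Rightarrow> real^'n \<Rightarrow> real^'q) \<Rightarrow> real^'n^'m \<Rightarrow> real^'q" where
  "lifted S W = (\<chi> j. trace_mat (transpose (bil_matrix S j) ** W))"

definition null_low_rank ::
  "(real^'m \<Rightarrow> real^'n \<Rightarrow> real^'q) \<Rightarrow> nat \<Rightarrow> (real^'n^'m) set" where
  "null_low_rank S k = {X. rank X \<le> k \<and> lifted S X = 0}"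

definition diff_set :: "'a::ab_group_add set \<Rightarrow> 'a set" where
  "diff_set K = {X1 - X2 | X1 X2. X1 \<in> K \<and> X2 \<in> K}"

definition col_space :: "real^'n^'m \<Rightarrow> (real^'m) set" where
  "col_space X = span (columns X)"

definition row_space :: "real^'n^'m \<Rightarrow> (real^'n) set" where
  "row_space X = span (rows X)"

definition orth_proj :: "(real^'k) set \<Rightarrow> real^'k \<Rightarrow> real^'k" where
  "orth_proj V x = (THE p. p \<in> V \<and> (\<forall>w\<in>V. (x - p) \<bullet> w = 0))"

definition proj_matrix :: "(real^'k) set \<Rightarrow> real^'k^'k" where
  "proj_matrix V = (\<chi> i j. orth_proj V (axis j 1) $ i)"

definition indep_rv ::
  "'w measure \<Rightarrow> ('w \<Rightarrow> 'a::topological_space) \<Rightarrow> ('w \<Rightarrow> 'b::topological_space) \<Rightarrow> bool" where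
  "indep_rv M X Y \<longleftrightarrow>
     (\<forall>A\<in>sets borel. \<forall>B\<in>sets borel.
        measure M {\<omega>\<in>space M. X \<omega> \<in> A \<and> Y \<omega> \<in> B}
          = measure M {\<omega>\<in>space M. X \<omega> \<in> A} * measure M {\<omega>\<in>space M. Y \<omega> \<in> B})"

end

theory Submission
  imports Defs
begin



lemma orth_proj_basis:
  fixes V :: "(real^'k) set"
  assumes BV: "span B = V" and orth: "pairwise orthogonal B" and n1: "\<And>b. b \<in> B \<Longrightarrow> norm b = 1"
    and fin: "finite B"
  shows "orth_proj V z = (\<Sum>b\<in>B. (z \<bullet> b) *\<^sub>R b)"
proof -
  define f where "f = (\<Sum>b\<in>B. (z \<bullet> b) *\<^sub>R b)"
  have bb: "b \<bullet> b' = (if b = b' then 1 else 0)" if "b \<in> B" "b' \<in> B" for b b'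
  proof (cases "b = b'")
    case True then show ?thesis using n1[OF that(1)] by (simp add: dot_square_norm)
  next
    case False then show ?thesis using orth that by (auto simp: pairwise_def orthogonal_def)
  qed
  have fV: "f \<in> V" unfolding f_def BV[symmetric]
    by (intro span_sum span_mul span_base) 
  have ob: "orthogonal (z - f) b" if "b \<in> B" for b
  proof -
    have "f \<bullet> b = (\<Sum>b'\<in>B. (z \<bullet> b') * (b' \<bullet> b))" unfolding f_def by (simp add: inner_sum_left)
    also have "\<dots> = (\<Sum>b'\<in>B. if b' = b then z \<bullet> b else 0)" 
      by (rule sum.cong) (auto simp: bb that)
    also have "\<dots> = z \<bullet> b" using fin that by simp
    finally show ?thesis by (simp add: orthogonal_def inner_diff_left)
  qed
  have ow: "(z - f) \<bullet> w = 0" if "w \<in> V" for w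
    using orthogonal_to_span[of w B "z - f"] ob that BV by (auto simp: orthogonal_def)
  show ?thesis unfolding orth_proj_def f_def[symmetric]
  proof (rule the_equality)
    show "f \<in> V \<and> (\<forall>w\<in>V. (z - f) \<bullet> w = 0)" using fV ow by auto
  next
    fix p assume p: "p \<in> V \<and> (\<forall>w\<in>V. (z - p) \<bullet> w = 0)"
    have sV: "subspace V" using BV subspace_span by blast
    have d: "p - f \<in> V" using p fV sV by (simp add: subspace_diff)
    have "(z - p) \<bullet> (p - f) = 0" using p d by auto
    moreover have "(z - f) \<bullet> (p - f) = 0" using ow d by auto
    ultimately have "(p - f) \<bullet> (p - f) = 0"
      by (smt (verit) inner_diff_left)
    then show "p = f" by simp
  qed
qed

lemma proj_matrix_basis:
  fixes V :: "(real^'k) set"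
  assumes BV: "span B = V" and orth: "pairwise orthogonal B" and n1: "\<And>b. b \<in> B \<Longrightarrow> norm b = 1"
    and fin: "finite B"
  shows "(norm (proj_matrix V *v z))\<^sup>2 = (\<Sum>b\<in>B. (z \<bullet> b)\<^sup>2)"
proof -
  have bb: "b \<bullet> b' = (if b = b' then 1 else 0)" if "b \<in> B" "b' \<in> B" for b b'
  proof (cases "b = b'")
    case True then show ?thesis using n1[OF that(1)] by (simp add: dot_square_norm)
  next
    case False then show ?thesis using orth that by (auto simp: pairwise_def orthogonal_def)
  qed
  have eq: "orth_proj V = (\<lambda>z. \<Sum>b\<in>B. (z \<bullet> b) *\<^sub>R b)"
    using orth_proj_basis[OF assms] by auto
  have lin: "linear (\<lambda>z. \<Sum>b\<in>B. (z \<bullet> b) *\<^sub>R b)"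
    by (intro linear_compose_sum linearI ballI) (auto simp: algebra_simps inner_add_left)
  have "proj_matrix V = matrix (orth_proj V)"
    unfolding proj_matrix_def matrix_def ..
  then have "proj_matrix V *v z = (\<Sum>b\<in>B. (z \<bullet> b) *\<^sub>R b)"
    using matrix_vector_mul(2)[OF lin] eq by metis
  moreover have "(norm (\<Sum>b\<in>B. (z \<bullet> b) *\<^sub>R b))\<^sup>2 = (\<Sum>b\<in>B. (z \<bullet> b)\<^sup>2)"
  proof -
    have "(norm (\<Sum>b\<in>B. (z \<bullet> b) *\<^sub>R b))\<^sup>2 = (\<Sum>b\<in>B. \<Sum>b'\<in>B. (z \<bullet> b) * (z \<bullet> b') * (b \<bullet> b'))"
      by (simp add: power2_norm_eq_inner inner_sum_left inner_sum_right sum_distrib_left) (auto intro!: sum.cong simp: inner_commute)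
    also have "\<dots> = (\<Sum>b\<in>B. \<Sum>b'\<in>B. if b' = b then (z \<bullet> b)\<^sup>2 else 0)"
      by (intro sum.cong refl) (auto simp: bb power2_eq_square)
    also have "\<dots> = (\<Sum>b\<in>B. (z \<bullet> b)\<^sup>2)" using fin by simp
    finally show ?thesis .
  qed
  ultimately show ?thesis by simp
qed
lemma indep_rv_compose:
  fixes X :: "'w \<Rightarrow> 'a::topological_space" and Y :: "'w \<Rightarrow> 'b::topological_space"
    and f :: "'a \<Rightarrow> 'c::topological_space" and g :: "'b \<Rightarrow> 'd::topological_space"
  assumes ind: "indep_rv M X Y" and fm: "f \<in> borel_measurable borel" and gm: "g \<in> borel_measurable borel"
  shows "indep_rv M (\<lambda>\<omega>. f (X \<omega>)) (\<lambda>\<omega>. g (Y \<omega>))"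
  unfolding indep_rv_def
proof (intro ballI)
  fix A :: "'c set" and B :: "'d set" assume ab: "A \<in> sets borel" "B \<in> sets borel"
  have fa: "f -` A \<in> sets borel" using measurable_sets[OF fm ab(1)] by simp
  have gb: "g -` B \<in> sets borel" using measurable_sets[OF gm ab(2)] by simp
  show "measure M {\<omega> \<in> space M. f (X \<omega>) \<in> A \<and> g (Y \<omega>) \<in> B} =
       measure M {\<omega> \<in> space M. f (X \<omega>) \<in> A} * measure M {\<omega> \<in> space M. g (Y \<omega>) \<in> B}"
  proof -
    from ind fa gb have "measure M {\<omega> \<in> space M. X \<omega> \<in> f -` A \<and> Y \<omega> \<in> g -` B} = measure M {\<omega> \<in> space M. X \<omega> \<in> f -` A} * measure M {\<omega> \<in> space M. Y \<omega> \<in> g -` B}"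
      unfolding indep_rv_def by blast
    then show ?thesis by simp
  qed
qed

lemma indep_rv_var:
  fixes X :: "'w \<Rightarrow> 'a::topological_space" and Y :: "'w \<Rightarrow> 'a::topological_space"
  assumes P: "prob_space M" and Xm: "X \<in> borel_measurable M" and Ym: "Y \<in> borel_measurable M"
    and ind: "indep_rv M X Y"
  shows "prob_space.indep_var M borel X borel Y"
proof -
  interpret prob_space M by (rule P)
  { fix S :: "'c measure" and X :: "_ \<Rightarrow> 'c"
    have "Int_stable {X -` A \<inter> space M |A. A \<in> sets S}"
    proof (safe intro!: Int_stableI)
      fix A B assume "A \<in> sets S" "B \<in> sets S"
      then show "\<exists>C. (X -` A \<inter> space M) \<inter> (X -` B \<inter> space M) = (X -` C \<inter> space M) \<and> C \<in> sets S"
        by (intro exI[of _ "A \<inter> B"]) auto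
    qed }
  note Int_stable = this
  show ?thesis unfolding indep_var_eq
  proof (intro conjI indep_set_sigma_sets Int_stable Xm Ym)
    show "indep_set {X -` A \<inter> space M |A. A \<in> sets borel} {Y -` A \<inter> space M |A. A \<in> sets borel}"
    proof (safe intro!: indep_setI)
      { fix A :: "'a set" assume "A \<in> sets borel" then show "X -` A \<inter> space M \<in> sets M"
        using Xm by (auto intro: measurable_sets) }
      { fix A :: "'a set" assume "A \<in> sets borel" then show "Y -` A \<inter> space M \<in> sets M"
        using Ym by (auto intro: measurable_sets) }
    next
      fix A :: "'a set" and B :: "'a set" assume ab: "A \<in> sets borel" "B \<in> sets borel"
      have e1: "(X -` A \<inter> space M) \<inter> (Y -` B \<inter> space M) = {\<omega>\<in>space M. X \<omega> \<in> A \<and> Y \<omega> \<in> B}" by auto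
      have e1': "{\<omega>\<in>space M. X \<omega> \<in> A} \<inter> {\<omega>\<in>space M. Y \<omega> \<in> B} = {\<omega>\<in>space M. X \<omega> \<in> A \<and> Y \<omega> \<in> B}" by auto
      have e2: "X -` A \<inter> space M = {\<omega>\<in>space M. X \<omega> \<in> A}" by auto
      have e3: "Y -` B \<inter> space M = {\<omega>\<in>space M. Y \<omega> \<in> B}" by auto
      show "prob ((X -` A \<inter> space M) \<inter> (Y -` B \<inter> space M)) =
        prob (X -` A \<inter> space M) * prob (Y -` B \<inter> space M)"
        unfolding e2 e3 e1' using ind ab unfolding indep_rv_def by blast
    qed
  qed
qed

lemma second_moment:
  fixes x :: "'w \<Rightarrow> real^'k"
  assumes xint: "\<And>i j. integrable M (\<lambda>\<omega>. x \<omega> $ i * x \<omega> $ j)"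
    and mom: "\<And>i j. (\<integral>\<omega>. x \<omega> $ i * x \<omega> $ j \<partial>M) = (if i = j then 1 else 0)"
  shows "integrable M (\<lambda>\<omega>. (x \<omega> \<bullet> w)\<^sup>2)" "(\<integral>\<omega>. (x \<omega> \<bullet> w)\<^sup>2 \<partial>M) = w \<bullet> w"
proof -
  have eq: "(\<lambda>\<omega>. (x \<omega> \<bullet> w)\<^sup>2) = (\<lambda>\<omega>. \<Sum>i\<in>UNIV. \<Sum>j\<in>UNIV. (w$i*w$j) * (x \<omega> $ i * x \<omega> $ j))"
    by (auto simp add: inner_vec_def power2_eq_square sum_product mult_ac)
  show "integrable M (\<lambda>\<omega>. (x \<omega> \<bullet> w)\<^sup>2)" unfolding eq
    by (simp add: xint)
  have "(\<integral>\<omega>. (x \<omega> \<bullet> w)\<^sup>2 \<partial>M) = (\<Sum>i\<in>UNIV. \<Sum>j\<in>UNIV. (w$i*w$j) * (if i = j then 1 else 0))"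
    unfolding eq by (simp add: xint mom)
  also have "\<dots> = w \<bullet> w" unfolding inner_vec_def
    by (intro sum.cong refl) (simp add: if_distrib[of "\<lambda>t. _ * t"] cong: if_cong)
  finally show "(\<integral>\<omega>. (x \<omega> \<bullet> w)\<^sup>2 \<partial>M) = w \<bullet> w" .
qed


lemma main_bound:
  fixes x :: "'w \<Rightarrow> real^'k" and V :: "(real^'k) set"
  assumes P: "prob_space M" and xm: "x \<in> borel_measurable M"
    and xint: "\<And>i j. integrable M (\<lambda>\<omega>. x \<omega> $ i * x \<omega> $ j)"
    and mom: "\<And>i j. (\<integral>\<omega>. x \<omega> $ i * x \<omega> $ j \<partial>M) = (if i = j then 1 else 0)"
    and ind: "indep_rv M (\<lambda>\<omega>. norm (x \<omega>)) (\<lambda>\<omega>. x \<omega> /\<^sub>R norm (x \<omega>))"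
    and sV: "subspace V" and dV: "dim V \<le> 2" and c: "0 < c"
  shows "measure M {\<omega> \<in> space M. c \<le> (norm (proj_matrix V *v (x \<omega> /\<^sub>R norm (x \<omega>))))\<^sup>2}
           \<le> 2 / (real CARD('k) * c)"
proof -
  interpret prob_space M by (rule P)
  obtain B where B: "B \<subseteq> V" "pairwise orthogonal B" "\<And>x. x \<in> B \<Longrightarrow> norm x = 1"
              "independent B" "card B = dim V" "span B = V"
    using orthonormal_basis_subspace[OF sV] by metis
  have finB: "finite B" using B(4) by (rule finiteI_independent)
  define h where "h v = (\<Sum>b\<in>B. (v \<bullet> b)\<^sup>2)" for v :: "real^'k"
  have hP: "\<And>z. (norm (proj_matrix V *v z))\<^sup>2 = h z"
    unfolding h_def by (rule proj_matrix_basis[OF B(6) B(2) B(3) finB])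
  define u where "u \<omega> = x \<omega> /\<^sub>R norm (x \<omega>)" for \<omega>
  define S where "S = {v. c \<le> h v}"
  define A where "A = {\<omega> \<in> space M. c \<le> h (u \<omega>)}"
  have goal_eq: "{\<omega> \<in> space M. c \<le> (norm (proj_matrix V *v (x \<omega> /\<^sub>R norm (x \<omega>))))\<^sup>2} = A"
    unfolding A_def u_def hP ..
  have hm: "h \<in> borel_measurable borel" unfolding h_def by measurable
  have um: "u \<in> borel_measurable M" unfolding u_def using xm by measurable
  have Sb: "S \<in> sets borel" unfolding S_def using hm by measurable
  have Iind: "(\<lambda>v. indicator S v :: real) \<in> borel_measurable borel" using Sb by measurable
  have sqm: "(\<lambda>r::real. r\<^sup>2) \<in> borel_measurable borel" by measurable
  have iv0: "indep_rv M (\<lambda>\<omega>. (norm (x \<omega>))\<^sup>2) (\<lambda>\<omega>. indicator S (u \<omega>) :: real)"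
    using indep_rv_compose[OF ind sqm Iind] unfolding u_def .
  have Nm: "(\<lambda>\<omega>. (norm (x \<omega>))\<^sup>2) \<in> borel_measurable M" using xm by measurable
  have Im: "(\<lambda>\<omega>. indicator S (u \<omega>) :: real) \<in> borel_measurable M" using um Iind by measurable
  have iv: "indep_var borel (\<lambda>\<omega>. (norm (x \<omega>))\<^sup>2) borel (\<lambda>\<omega>. indicator S (u \<omega>) :: real)"
    by (rule indep_rv_var[OF P Nm Im iv0])
  have Neq: "(\<lambda>\<omega>. (norm (x \<omega>))\<^sup>2) = (\<lambda>\<omega>. \<Sum>i\<in>UNIV. x \<omega> $ i * x \<omega> $ i)"
    by (simp add: power2_norm_eq_inner inner_vec_def)
  have Nint: "integrable M (\<lambda>\<omega>. (norm (x \<omega>))\<^sup>2)" unfolding Neq by (simp add: xint)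
  have EN: "(\<integral>\<omega>. (norm (x \<omega>))\<^sup>2 \<partial>M) = real CARD('k)" unfolding Neq by (simp add: xint mom)
  have Iint: "integrable M (\<lambda>\<omega>. indicator S (u \<omega>) :: real)"
    by (rule integrable_const_bound[where B=1]) (simp add: indicator_def, rule Im)
  have Aev: "A \<in> events" unfolding A_def using um hm by measurable
  have EI: "(\<integral>\<omega>. indicator S (u \<omega>) \<partial>M) = prob A"
  proof -
    have "(\<integral>\<omega>. indicator S (u \<omega>) \<partial>M) = (\<integral>\<omega>. indicator A \<omega> \<partial>M)"
      by (rule Bochner_Integration.integral_cong[OF refl]) (auto simp: A_def S_def indicator_def)
    also have "\<dots> = prob A" using Aev by simp
    finally show ?thesis .
  qed
  have E1: "(\<integral>\<omega>. (norm (x \<omega>))\<^sup>2 * indicator S (u \<omega>) \<partial>M) = real CARD('k) * prob A"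
    using indep_var_lebesgue_integral[OF iv Nint Iint] EN EI by simp
  have NIint: "integrable M (\<lambda>\<omega>. (norm (x \<omega>))\<^sup>2 * indicator S (u \<omega>))"
    using indep_var_integrable[OF iv Nint Iint] .
  have heq: "(\<lambda>\<omega>. h (x \<omega>)) = (\<lambda>\<omega>. \<Sum>b\<in>B. (x \<omega> \<bullet> b)\<^sup>2)" unfolding h_def ..
  have hint: "integrable M (\<lambda>\<omega>. h (x \<omega>))" unfolding heq
    using second_moment(1)[OF xint mom] by simp
  have Eh: "(\<integral>\<omega>. h (x \<omega>) \<partial>M) = real (card B)" unfolding heq
  proof -
    have "(\<integral>\<omega>. (\<Sum>b\<in>B. (x \<omega> \<bullet> b)\<^sup>2) \<partial>M) = (\<Sum>b\<in>B. b \<bullet> b)"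
      using second_moment[OF xint mom] by (simp add: integral_sum)
    also have "\<dots> = (\<Sum>b\<in>B. 1)" using B(3) by (intro sum.cong refl) (simp add: dot_square_norm)
    finally show "(\<integral>\<omega>. (\<Sum>b\<in>B. (x \<omega> \<bullet> b)\<^sup>2) \<partial>M) = real (card B)" by simp
  qed
  have hx: "h (x \<omega>) = (norm (x \<omega>))\<^sup>2 * h (u \<omega>)" for \<omega>
  proof (cases "x \<omega> = 0")
    case True then show ?thesis by (simp add: h_def u_def)
  next
    case False
    then have n0: "norm (x \<omega>) \<noteq> 0" by simp
    have "h (u \<omega>) = (\<Sum>b\<in>B. (x \<omega> \<bullet> b)\<^sup>2 / (norm (x \<omega>))\<^sup>2)"
      unfolding h_def u_def by (simp add: power_divide divide_inverse mult.commute power_mult_distrib power_inverse)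
    also have "\<dots> = h (x \<omega>) / (norm (x \<omega>))\<^sup>2" unfolding h_def by (simp add: sum_divide_distrib)
    finally show ?thesis using n0 by simp
  qed
  have pw: "(norm (x \<omega>))\<^sup>2 * indicator S (u \<omega>) \<le> h (x \<omega>) / c" for \<omega>
  proof (cases "u \<omega> \<in> S")
    case True
    then have "c \<le> h (u \<omega>)" unfolding S_def by simp
    then have "(norm (x \<omega>))\<^sup>2 * c \<le> (norm (x \<omega>))\<^sup>2 * h (u \<omega>)" by (simp add: mult_left_mono)
    then show ?thesis using True c hx[of \<omega>] by (simp add: pos_le_divide_eq)
  next
    case False
    have "0 \<le> h (x \<omega>)" unfolding h_def by (simp add: sum_nonneg)
    then show ?thesis using False c by simp
  qed
  have "real CARD('k) * prob A \<le> (\<integral>\<omega>. h (x \<omega>) / c \<partial>M)"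
    unfolding E1[symmetric] by (rule integral_mono[OF NIint]) (use hint pw in auto)
  also have "\<dots> = real (card B) / c" using Eh by simp
  also have "\<dots> \<le> 2 / c" using B(5) dV c by (simp add: divide_right_mono)
  finally have "real CARD('k) * prob A \<le> 2 / c" .
  then have "prob A \<le> 2 / (real CARD('k) * c)"
    using c by (simp add: field_simps)
  then show ?thesis unfolding goal_eq .
qed


theorem lemma1:
  fixes S :: "real^'m \<Rightarrow> real^'n \<Rightarrow> real^'q"
    and K' :: "(real^'n^'m) set"
    and X :: "real^'n^'m"
    and \<delta> :: real
    and M :: "'w measure"
    and x :: "'w \<Rightarrow> real^'m"
    and y :: "'w \<Rightarrow> real^'n"
  assumes bil: "bilinear S"
    and X_in: "X \<in> null_low_rank S 2 \<inter> diff_set K' - {0}"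
    and delta: "0 < \<delta>" "\<delta> < 1"
    and P: "prob_space M"
    and x_rv: "x \<in> borel_measurable M"
    and y_rv: "y \<in> borel_measurable M"
    \<comment> \<open>(A1) zero mean and identity covariance (second moments exist)\<close>
    and x_int: "\<And>i j. integrable M (\<lambda>\<omega>. x \<omega> $ i * x \<omega> $ j)"
    and y_int: "\<And>i j. integrable M (\<lambda>\<omega>. y \<omega> $ i * y \<omega> $ j)"
    and x_int1: "\<And>i. integrable M (\<lambda>\<omega>. x \<omega> $ i)"
    and y_int1: "\<And>i. integrable M (\<lambda>\<omega>. y \<omega> $ i)"
    and x_mean: "\<And>i. (\<integral>\<omega>. x \<omega> $ i \<partial>M) = 0"
    and y_mean: "\<And>i. (\<integral>\<omega>. y \<omega> $ i \<partial>M) = 0"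
    and x_cov: "\<And>i j. (\<integral>\<omega>. (x \<omega> $ i - (\<integral>\<omega>'. x \<omega>' $ i \<partial>M)) *
                          (x \<omega> $ j - (\<integral>\<omega>'. x \<omega>' $ j \<partial>M)) \<partial>M) = (if i = j then 1 else 0)"
    and y_cov: "\<And>i j. (\<integral>\<omega>. (y \<omega> $ i - (\<integral>\<omega>'. y \<omega>' $ i \<partial>M)) *
                          (y \<omega> $ j - (\<integral>\<omega>'. y \<omega>' $ j \<partial>M)) \<partial>M) = (if i = j then 1 else 0)"
    \<comment> \<open>(A2) x and y independent\<close>
    and xy_indep: "indep_rv M x y"
    \<comment> \<open>(A3) norm and direction independent\<close>
    and x_dir: "indep_rv M (\<lambda>\<omega>. norm (x \<omega>)) (\<lambda>\<omega>. x \<omega> /\<^sub>R norm (x \<omega>))"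
    and y_dir: "indep_rv M (\<lambda>\<omega>. norm (y \<omega>)) (\<lambda>\<omega>. y \<omega> /\<^sub>R norm (y \<omega>))"
  shows "(measure M {\<omega> \<in> space M.
            (norm (proj_matrix (col_space X) *v (x \<omega> /\<^sub>R norm (x \<omega>))))\<^sup>2 \<ge> 1 - \<delta>}
           \<le> 2 / (real CARD('m) * (1 - \<delta>))) \<and>
         (measure M {\<omega> \<in> space M.
            (norm (proj_matrix (row_space X) *v (y \<omega> /\<^sub>R norm (y \<omega>))))\<^sup>2 \<ge> 1 - \<delta>}
           \<le> 2 / (real CARD('n) * (1 - \<delta>)))"
  proof -
  have rk: "rank X \<le> 2" using X_in by (simp add: null_low_rank_def)
  have mx: "\<And>i j. (\<integral>\<omega>. x \<omega> $ i * x \<omega> $ j \<partial>M) = (if i = j then 1 else 0)"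
    using x_cov by (simp add: x_mean)
  have my: "\<And>i j. (\<integral>\<omega>. y \<omega> $ i * y \<omega> $ j \<partial>M) = (if i = j then 1 else 0)"
    using y_cov by (simp add: y_mean)
  have c: "0 < 1 - \<delta>" using delta by simp
  have dc: "dim (col_space X) \<le> 2" unfolding col_space_def using rk
    by (simp add: dim_span column_rank_def)
  have dr: "dim (row_space X) \<le> 2" unfolding row_space_def using rk
    by (simp add: dim_span row_rank_def)
  show ?thesis
    using main_bound[OF P x_rv x_int mx x_dir _ dc c, unfolded col_space_def]
      main_bound[OF P y_rv y_int my y_dir _ dr c, unfolded row_space_def]
    by (simp add: col_space_def row_space_def subspace_span)
qed

end
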